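(* Fix a finite alphabet $\mathcal{X}\subset\mathbb{C}$ and consider the following communication model (a coherent-processing receiver with feedback-adapted displacement and on/off photon detection). A message $M_s$, uniformly distributed on $\{1,\dots,e^{NR}\}$, is encoded into a codeword $(X_1,\dots,X_N)\in\mathcal{X}^N$ satisfying the mean-photon-number constraint $\mathbb{E}[|X_i|^2]=\mathcal{E}$ for every $i$. In the $i$-th symbol period the receiver applies a complex control (displacement) signal $l_i=l_i(Y_1^{i-1})\in\mathbb{C}$, held constant over the symbol period and allowed to be an arbitrary function of the previous outputs $Y_1^{i-1}=(Y_1,\dots,Y_{i-1})$, and then observes the binary output $Y_i\in\{0,1\}$ (whether or not any photon arrives in the symbol period) with $$\Pr(Y_i=0\mid X_i,Y_1^{i-1})=e^{-|X_i+l_i(Y_1^{i-1})|^2},\qquad \Pr(Y_i=1\mid X_i,Y_1^{i-1})=1-e^{-|X_i+l_i(Y_1^{i-1})|^2},$$ conditionally independent of $(X_j)_{j\neq i}$. The decoder outputs an estimate $\hat M_s(Y_1^N)$. Let $C_{\sf coherent}(\mathcal{E})$ (in nats per channel use) be the supremum of rates $R$ for which there exist encoders, control policies and decoders with $\Pr(M_s\neq \hat M_s(Y_1^N))\to 0$ as $N\to\infty$. Then, as $\mathcal{E}\to 0$, $$\frac{C_{\sf coherent}(\mathcal{E})}{\mathcal{E}}\le \log\frac{1}{\mathcal{E}}-\log\log\frac{1}{\mathcal{E}}+O(1).$$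
   Context: $\log$ denotes the natural logarithm. $O(1)$ denotes a function of $\mathcal{E}$ that stays bounded as $\mathcal{E}\to 0$. Physically, $X_i$ is the complex amplitude of the coherent state $|X_i\rangle$ sent in the $i$-th channel use over a lossless optical channel (loss subsumed into $\mathcal{E}$), the receiver mixes it with a local coherent signal of amplitude $l_i$ so that the detected field has amplitude $X_i+l_i$, and an ideal photon counter produces Poisson-distributed counts with mean $|X_i+l_i|^2$; $Y_i$ records whether the count is zero or not. *)

theory Defs
  imports "HOL-Analysis.Analysis"
begin

text \<open>Binary output: False = no photon detected (Y = 0), True = at least one photon (Y = 1).
  A control policy is a function from the list of previous outputs (Y_1,...,Y_{i-1})
  to the displacement l_i; the length of the list determines the time index.\<close>

definition p_out :: "complex \<Rightarrow> complex \<Rightarrow> bool \<Rightarrow> real" where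
  "p_out x l y = (if y then 1 - exp (- (cmod (x + l))\<^sup>2) else exp (- (cmod (x + l))\<^sup>2))"

definition seq_prob :: "(nat \<Rightarrow> complex) \<Rightarrow> (bool list \<Rightarrow> complex) \<Rightarrow> bool list \<Rightarrow> real" where
  "seq_prob x l ys = (\<Prod>i<length ys. p_out (x i) (l (take i ys)) (ys ! i))"

definition num_msgs :: "nat \<Rightarrow> real \<Rightarrow> nat" where
  "num_msgs N R = nat \<lceil>exp (real N * R)\<rceil>"

definition valid_encoder :: "complex set \<Rightarrow> real \<Rightarrow> nat \<Rightarrow> nat \<Rightarrow> (nat \<Rightarrow> nat \<Rightarrow> complex) \<Rightarrow> bool" where
  "valid_encoder A E N Mn enc \<longleftrightarrow>
     (\<forall>m<Mn. \<forall>i<N. enc m i \<in> A) \<and>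
     (\<forall>i<N. (\<Sum>m<Mn. (cmod (enc m i))\<^sup>2) / real Mn = E)"

definition err_prob :: "nat \<Rightarrow> nat \<Rightarrow> (nat \<Rightarrow> nat \<Rightarrow> complex) \<Rightarrow> (bool list \<Rightarrow> complex)
      \<Rightarrow> (bool list \<Rightarrow> nat) \<Rightarrow> real" where
  "err_prob N Mn enc l dec =
     (\<Sum>m<Mn. \<Sum>ys\<in>{ys. length ys = N}. seq_prob (enc m) l ys * (if dec ys = m then 0 else 1))
       / real Mn"

definition achievable :: "complex set \<Rightarrow> real \<Rightarrow> real \<Rightarrow> bool" where
  "achievable A E R \<longleftrightarrow>
     (\<exists>enc :: nat \<Rightarrow> nat \<Rightarrow> nat \<Rightarrow> complex. \<exists>l :: nat \<Rightarrow> bool list \<Rightarrow> complex.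
      \<exists>dec :: nat \<Rightarrow> bool list \<Rightarrow> nat.
        (\<forall>\<^sub>F N in sequentially. valid_encoder A E N (num_msgs N R) (enc N)) \<and>
        ((\<lambda>N. err_prob N (num_msgs N R) (enc N) (l N) (dec N)) \<longlonglongrightarrow> 0))"

end

theory Submission
  imports Defs "HOL-Analysis.Analysis"
begin


lemma pade: fixes w::real assumes "0 \<le> w" shows "(1 + w/2) * (1 - exp(-w)) \<le> w"
proof -
  let ?f = "\<lambda>w::real. w - (1 + w/2) * (1 - exp(-w))"
  have "?f 0 \<le> ?f w"
  proof (rule DERIV_nonneg_imp_nondecreasing[OF assms])
    fix x::real assume x: "0 \<le> x" "x \<le> w"
    have d: "DERIV ?f x :> (1 - ((1/2) * (1 - exp(-x)) + (1 + x/2) * exp(-x)))"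
      by (auto intro!: derivative_eq_intros)
    have "(1 + x) * exp(-x) \<le> 1"
      using exp_ge_add_one_self[of x] by (simp add: exp_minus field_simps)
    hence "1 - ((1/2) * (1 - exp(-x)) + (1 + x/2) * exp(-x)) \<ge> 0"
    proof -
      have "(1/2) * (1 - exp(-x)) + (1 + x/2) * exp(-x) = 1/2 + ((1 + x) * exp(-x))/2"
        by (simp add: field_simps)
      thus ?thesis using \<open>(1 + x) * exp(-x) \<le> 1\<close> by linarith
    qed
    thus "\<exists>y. DERIV ?f x :> y \<and> y \<ge> 0" using d by blast
  qed
  thus ?thesis by simp
qed

lemma ln_le_lin: fixes z k::real assumes "0 < z" "0 < k" shows "ln z \<le> z/k + ln k - 1"
proof -
  have "ln (z/k) \<le> z/k - 1" using assms by (intro ln_le_minus_one) simp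
  thus ?thesis using assms by (simp add: ln_div)
qed

lemma core: fixes w L::real assumes "0 < w" "2 \<le> L"
  shows "(1 - exp(-w)) * (L + ln w) \<le> (L - ln L + 1) * w"
proof -
  have lnL: "ln L \<le> L/2" using ln_le_lin[of L 2] assms ln_2_less_1 by simp
  have q0: "0 \<le> 1 - exp(-w)" using assms by simp
  have pd: "(1 + w/2) * (1 - exp(-w)) \<le> w" using pade assms by simp
  show ?thesis
  proof (cases "L + ln w \<le> 0")
    case True
    have "(1 - exp(-w)) * (L + ln w) \<le> 0" using True q0 by (simp add: mult_nonneg_nonpos)
    also have "0 \<le> (L - ln L + 1) * w" using lnL assms by simp
    finally show ?thesis .
  next
    case False
    have z: "ln (w*L) \<le> (w*L)/4 + ln 4 - 1" using ln_le_lin[of "w*L" 4] assms by simp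
    have l4: "ln (4::real) \<le> 2"
    proof -
      have "ln (4::real) = ln (2^2)" by simp
      also have "\<dots> = 2 * ln 2" by (simp only: ln_realpow)
      finally show ?thesis using ln_2_less_1 by simp
    qed
    have "ln (w*L) = ln w + ln L" using assms by (simp add: ln_mult)
    hence k: "L + ln w \<le> (L - ln L + 1) * (1 + w/2)"
    proof -
      have m: "(L/2)*(w/2) \<le> (L - ln L + 1)*(w/2)" using lnL assms by (intro mult_right_mono) auto
      have "(L - ln L + 1) * (1 + w/2) = (L - ln L + 1) + (L - ln L + 1)*(w/2)" by (simp add: algebra_simps)
      moreover have "(L/2)*(w/2) = (w*L)/4" by simp
      ultimately show ?thesis using m z l4 \<open>ln (w*L) = ln w + ln L\<close> by linarith
    qed
    have "(1 - exp(-w)) * (L + ln w) * (1 + w/2) \<le> (1 - exp(-w)) * ((L - ln L + 1) * (1 + w/2)) * (1 + w/2)"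
      using k q0 assms by (intro mult_right_mono mult_left_mono) auto
    also have "\<dots> = ((1 + w/2) * (1 - exp(-w))) * ((L - ln L + 1) * (1 + w/2))" by simp
    also have "\<dots> \<le> w * ((L - ln L + 1) * (1 + w/2))"
      using pd lnL assms by (intro mult_right_mono) auto
    also have "\<dots> = ((L - ln L + 1) * w) * (1 + w/2)" by (simp add: algebra_simps)
    finally have "(1 - exp(-w)) * (L + ln w) * (1 + w/2) \<le> ((L - ln L + 1) * w) * (1 + w/2)" .
    thus ?thesis using assms by (simp add: mult_le_cancel_right)
  qed
qed


definition dfun :: "real \<Rightarrow> real \<Rightarrow> real" where
  "dfun q r = q * ln (q/r) + (1-q) * ln ((1-q)/(1-r))"

lemma xlnx_le: fixes q r :: real assumes "0 \<le> q" "0 < r" shows "q * ln (q/r) \<le> q * (q/r - 1)"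
proof (cases "q = 0")
  case False
  hence "ln (q/r) \<le> q/r - 1" using assms by (intro ln_le_minus_one) simp
  thus ?thesis using assms by (intro mult_left_mono) auto
qed simp

lemma chi2: fixes q r :: real assumes "0 \<le> q" "q \<le> 1" "0 < r" "r < 1"
  shows "dfun q r \<le> (q-r)^2 / (r*(1-r))"
proof -
  have a: "q * ln (q/r) \<le> q * (q/r - 1)" using xlnx_le assms by simp
  have b: "(1-q) * ln ((1-q)/(1-r)) \<le> (1-q) * ((1-q)/(1-r) - 1)" using xlnx_le assms by simp
  have "q * (q/r - 1) + (1-q) * ((1-q)/(1-r) - 1) = (q-r)^2 / (r*(1-r))"
    using assms by (simp add: field_simps power2_eq_square)
  thus ?thesis using a b unfolding dfun_def by linarith
qed

lemma chi2_bound: fixes q r X :: real assumes "0 \<le> q" "q \<le> 1" "0 < r" "r < 1"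
  "(q-r)^2 \<le> X * (r*(1-r))" shows "dfun q r \<le> X"
proof -
  have "(q-r)^2 / (r*(1-r)) \<le> X" using assms by (simp add: pos_divide_le_eq)
  thus ?thesis using chi2[OF assms(1-4)] by linarith
qed

lemma lnE: fixes E::real assumes "0 < E" "E \<le> 1/2" shows "0 \<le> - ln (1-E)" "- ln (1-E) \<le> 2*E"
proof -
  show "0 \<le> - ln (1-E)" using assms by simp
  have "ln (1/(1-E)) \<le> 1/(1-E) - 1" using assms by (intro ln_le_minus_one) simp
  moreover have "ln (1/(1-E)) = - ln (1-E)" using assms by (simp add: ln_div)
  moreover have "1/(1-E) - 1 \<le> 2*E" using assms by (simp add: field_simps)
  ultimately show "- ln (1-E) \<le> 2*E" by linarith
qed

lemma one_minus_exp_ge: fixes u::real shows "u * exp(-u) \<le> 1 - exp(-u)"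
proof -
  have "exp(-u) * (1 + u) \<le> exp(-u) * exp u" by (intro mult_left_mono) auto
  thus ?thesis by (simp add: exp_minus field_simps)
qed

lemma one_minus_exp_le: fixes t::real shows "1 - exp(-t) \<le> t"
  using exp_ge_add_one_self[of "-t"] by linarith

lemma expdiff_le: fixes a b :: real assumes "a \<le> b" shows "exp(-a) - exp(-b) \<le> exp(-a) * (b - a)"
proof -
  have "exp(-a) - exp(-b) = exp(-a) * (1 - exp(-(b-a)))" by (simp add: algebra_simps exp_diff exp_minus field_simps)
  also have "\<dots> \<le> exp(-a) * (b-a)" by (intro mult_left_mono one_minus_exp_le) auto
  finally show ?thesis .
qed



locale pw =
  fixes E c v L u w Q R b s :: real
  assumes E0: "0 < E" and LL: "2000 \<le> ln (1/E)" and c0: "0 \<le> c" and v0: "0 \<le> v"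
  and L_def: "L = ln (1/E)" and u_def: "u = c^2" and w_def: "w = v^2"
  and Q_def: "Q = 1 - exp(-w)" and R_def: "R = 1 - (1-E)*exp(-u)"
  and b_def: "b = L - ln L + 300" and s_def: "s = (v-c)^2"
begin

lemma L2: "2000 \<le> L" using LL L_def by simp

lemma Eh: "E \<le> 1/2"
proof -
  have "ln (1/E) \<le> 1/E - 1" using E0 by (intro ln_le_minus_one) simp
  hence "2001 \<le> 1/E" using LL by linarith
  thus ?thesis using E0 by (simp add: field_simps)
qed

lemma lnL0: "0 \<le> ln L" using L2 by simp

lemma lnLb: "ln L \<le> L/8 + 2"
proof -
  have l8: "ln (8::real) \<le> 3"
  proof -
    have "ln (8::real) = ln (2^3)" by simp
    also have "\<dots> = 3 * ln 2" by (simp only: ln_realpow)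
    finally show ?thesis using ln_2_less_1 by simp
  qed
  show ?thesis using ln_le_lin[of L 8] L2 l8 by simp
qed

lemma b300: "300 \<le> b" using lnLb L2 b_def by simp
lemma u0: "0 \<le> u" using u_def by simp
lemma w0: "0 \<le> w" using w_def by simp
lemma s0: "0 \<le> s" using s_def by simp
lemma Q0: "0 \<le> Q" using Q_def w0 by simp
lemma Q1: "Q \<le> 1" using Q_def by simp
lemma Qw: "Q \<le> w" using Q_def one_minus_exp_le by simp
lemma eu1: "exp(-u) \<le> 1" using u0 by simp
lemma oneR: "1 - R = (1-E) * exp(-u)" using R_def by simp
lemma oneQ: "1 - Q = exp(-w)" using Q_def by simp
lemma RE: "E \<le> R"
proof -
  have "(1-E)*exp(-u) \<le> (1-E)*1" using eu1 Eh by (intro mult_left_mono) auto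
  thus ?thesis using R_def by simp
qed
lemma R0: "0 < R" using RE E0 by simp
lemma R1: "R < 1" using R_def E0 Eh by simp
lemma Ru: "1 - exp(-u) \<le> R"
proof -
  have "(1-E)*exp(-u) \<le> 1*exp(-u)" using E0 by (intro mult_right_mono) auto
  thus ?thesis using R_def by simp
qed
lemma Ruu: "u * exp(-u) \<le> R" using one_minus_exp_ge[of u] Ru by linarith
lemma lE: "0 \<le> - ln (1-E)" "- ln (1-E) \<le> 2*E" using lnE E0 Eh by auto

lemma dec: "dfun Q R = Q * ln (Q/R) + exp(-w) * (u - w - ln (1-E))"
proof -
  have "ln ((1-Q)/(1-R)) = ln (exp(-w)) - (ln (1-E) + ln (exp(-u)))"
    using E0 Eh oneR oneQ by (simp add: ln_div ln_mult)
  hence "(1-Q) * ln ((1-Q)/(1-R)) = exp(-w) * (u - w - ln (1-E))" using oneQ by simp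
  thus ?thesis using dfun_def by simp
qed

lemma T2b: "exp(-w) * (u - w - ln (1-E)) \<le> exp(-w) * (u - w) + 2*E"
proof -
  have "exp(-w) * (- ln (1-E)) \<le> 1 * (2*E)" using lE w0 by (intro mult_mono) auto
  thus ?thesis by (simp add: algebra_simps)
qed

lemma RR: "(1/2) * (u * exp(-u)^2) \<le> R * (1-R)"
proof -
  have "(1/2) * (u * exp(-u)^2) = (u * exp(-u)) * ((1/2) * exp(-u))" by (simp add: power2_eq_square)
  also have "\<dots> \<le> R * ((1-E) * exp(-u))" using Ruu Eh R0 by (intro mult_mono) auto
  finally show ?thesis using oneR by simp
qed

lemma Ebit: "(E * exp(-u))^2 \<le> 2*E * (R * (1-R))"
proof -
  have "E * exp(-u) \<le> E * 1" using eu1 E0 by (intro mult_left_mono) auto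
  also have "\<dots> \<le> R * 1" using RE by simp
  also have "\<dots> \<le> R * (2*(1-E))" using R0 Eh by (intro mult_left_mono) auto
  finally have h: "E * exp(-u) \<le> R * (2*(1-E))" .
  have "(E * exp(-u))^2 = (E * exp(-u)) * (E * exp(-u))" by (simp add: power2_eq_square)
  also have "\<dots> \<le> (R * (2*(1-E))) * (E * exp(-u))"
    using h E0 by (intro mult_right_mono) auto
  also have "\<dots> = 2*E*(R*(1-R))" by (subst oneR) (simp add: algebra_simps)
  finally show ?thesis .
qed

end

context pw begin

lemma regC: assumes C: "w \<le> u - 1" shows "dfun Q R \<le> 300 * E + b * s"
proof -
  have wu: "w \<le> u" using C by simp
  have vc: "v \<le> c"
  proof (rule ccontr)
    assume "\<not> v \<le> c" hence "c^2 < v^2" using c0 by (intro power_strict_mono) auto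
    thus False using wu u_def w_def by simp
  qed
  have "exp(-u) \<le> exp(-w)" using wu by simp
  hence QR: "Q \<le> R" using Ru Q_def by linarith
  have T1: "Q * ln (Q/R) \<le> 0"
  proof (cases "Q = 0")
    case False
    hence "ln (Q/R) \<le> 0" using QR Q0 R0 by simp
    thus ?thesis using Q0 by (simp add: mult_nonneg_nonpos)
  qed simp
  have uw: "u - w = (c - v) * (c + v)" using u_def w_def by (simp add: power2_eq_square algebra_simps)
  have key: "exp(-w) * (u - w) \<le> 9 * s"
  proof (cases "2 * v \<le> c")
    case True
    have "exp(-w) * (u-w) \<le> 1 * (u-w)" using wu w0 by (intro mult_right_mono) auto
    also have "\<dots> = (c-v) * (c+v)" using uw by simp
    also have "\<dots> \<le> (c-v) * (3 * (c-v))" using True vc by (intro mult_left_mono) auto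
    also have "\<dots> = 3 * s" using s_def by (simp add: power2_eq_square algebra_simps)
    finally show ?thesis using s0 by linarith
  next
    case False
    have cv: "0 < c + v" using False v0 c0 by linarith
    have "c + v \<le> 3 * v" using False by simp
    hence "(c+v)^2 \<le> (3 * v)^2" using cv by (intro power_mono) auto
    hence "(c+v)^2 \<le> 9 * w" using w_def by (simp add: power2_eq_square)
    hence "exp(-w) * (c+v)^2 \<le> exp(-w) * (9 * w)" by (intro mult_left_mono) auto
    also have "\<dots> \<le> 9"
    proof -
      have "w \<le> exp w" using exp_ge_add_one_self[of w] by linarith
      hence "w * exp(-w) \<le> 1" by (simp add: exp_minus field_simps)
      thus ?thesis by (simp add: mult.commute)
    qed
    also have "9 \<le> 9 * ((c-v) * (c+v))" using C uw by simp
    finally have "(exp(-w) * (c+v)) * (c+v) \<le> (9 * (c-v)) * (c+v)" by (simp add: power2_eq_square algebra_simps)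
    hence "exp(-w) * (c+v) \<le> 9 * (c-v)" using cv by (simp add: mult_le_cancel_right)
    hence "(exp(-w) * (c+v)) * (c-v) \<le> (9 * (c-v)) * (c-v)" using vc by (intro mult_right_mono) auto
    moreover have "exp(-w) * (u-w) = (exp(-w) * (c+v)) * (c-v)" using uw by simp
    moreover have "(9 * (c-v)) * (c-v) = 9 * s" using s_def by (simp add: power2_eq_square algebra_simps)
    ultimately show ?thesis by simp
  qed
  have "9 * s \<le> b * s" using b300 s0 by (intro mult_right_mono) auto
  thus ?thesis using dec T1 T2b key E0 by linarith
qed

end

context pw begin

lemma regB: assumes B: "u - 1 < w" "v \<le> c" shows "dfun Q R \<le> 300 * E + b * s"
proof -
  have wu: "w \<le> u" using B u_def w_def c0 v0 by (simp add: power_mono)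
  define A where "A = exp(-w) - exp(-u)"
  have A0: "0 \<le> A" using A_def wu by simp
  have Ab: "A \<le> exp(-w) * (u - w)" using expdiff_le[OF wu] A_def by simp
  have RQ: "R - Q = A + E * exp(-u)" using A_def R_def Q_def by (simp add: algebra_simps)
  have sq: "(Q-R)^2 \<le> 2 * A^2 + 2 * (E * exp(-u))^2"
  proof -
    have "(Q-R)^2 = (A + E * exp(-u))^2" using RQ by (simp add: power2_eq_square algebra_simps)
    also have "\<dots> \<le> 2 * A^2 + 2 * (E * exp(-u))^2"
    proof -
      have "0 \<le> (A - E * exp(-u))^2" by simp
      thus ?thesis by (simp add: power2_eq_square algebra_simps)
    qed
    finally show ?thesis .
  qed
  have uw2: "(u - w)^2 \<le> s * (4 * u)"
  proof -
    have "u - w = (c-v) * (c+v)" using u_def w_def by (simp add: power2_eq_square algebra_simps)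
    hence "(u-w)^2 = (c-v)^2 * (c+v)^2" by (simp add: power_mult_distrib)
    hence e: "(u-w)^2 = s * (c+v)^2" using s_def by (simp add: power2_commute)
    have "c + v \<le> 2 * c" using B by simp
    hence "(c+v)^2 \<le> (2 * c)^2" using c0 v0 by (intro power_mono) auto
    hence "(c+v)^2 \<le> 4 * u" using u_def by (simp add: power2_eq_square)
    thus ?thesis using e s0 by (simp add: mult_left_mono)
  qed
  have e3: "exp(-w) \<le> 3 * exp(-u)"
  proof -
    have "exp(u-w) \<le> exp 1" using B by simp
    hence "exp(u-w) \<le> 3" using exp_le by linarith
    thus ?thesis by (simp add: exp_diff exp_minus field_simps)
  qed
  have A2: "2 * A^2 \<le> 144 * s * (R * (1-R))"
  proof -
    have "A^2 \<le> (exp(-w) * (u-w))^2" using A0 Ab by (simp add: power_mono)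
    also have "\<dots> = exp(-w)^2 * (u-w)^2" by (simp add: power_mult_distrib)
    also have "\<dots> \<le> (3 * exp(-u))^2 * (s * (4 * u))"
      using e3 uw2 by (intro mult_mono power_mono) auto
    finally have "2 * A^2 \<le> 144 * s * ((1/2) * (u * exp(-u)^2))" by (simp add: power2_eq_square algebra_simps)
    also have "\<dots> \<le> 144 * s * (R * (1-R))" using RR s0 by (intro mult_left_mono) auto
    finally show ?thesis .
  qed
  have "(Q-R)^2 \<le> (144 * s + 4 * E) * (R * (1-R))"
    using sq A2 Ebit by (simp add: algebra_simps)
  hence "dfun Q R \<le> 144 * s + 4 * E"
    using Q0 Q1 R0 R1 by (intro chi2_bound) auto
  moreover have "144 * s \<le> b * s" using b300 s0 by (intro mult_right_mono) auto
  ultimately show ?thesis using E0 by linarith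
qed

lemma regA: assumes A: "c \<le> v" "v \<le> 3 * c" shows "dfun Q R \<le> 300 * E + b * s"
proof -
  have uw: "u \<le> w" using A u_def w_def c0 v0 by (simp add: power_mono)
  have sq: "(Q-R)^2 \<le> (exp(-u) * (w-u))^2 + (E * exp(-u))^2"
  proof (cases "R \<le> Q")
    case True
    have "Q - R \<le> exp(-u) - exp(-w)" using Q_def R_def E0 by (simp add: algebra_simps)
    also have "\<dots> \<le> exp(-u) * (w-u)" using expdiff_le[OF uw] .
    finally have "(Q-R)^2 \<le> (exp(-u) * (w-u))^2" using True by (intro power_mono) auto
    moreover have "0 \<le> (E * exp(-u))^2" by simp
    ultimately show ?thesis by linarith
  next
    case False
    have "exp(-w) \<le> exp(-u)" using uw by simp
    moreover have "R - Q = exp(-w) - exp(-u) + E * exp(-u)" using Q_def R_def by (simp add: algebra_simps)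
    ultimately have "R - Q \<le> E * exp(-u)" by linarith
    hence "(R-Q)^2 \<le> (E * exp(-u))^2" using False by (intro power_mono) auto
    moreover have "(Q-R)^2 = (R-Q)^2" by (simp add: power2_commute)
    moreover have "0 \<le> (exp(-u) * (w-u))^2" by simp
    ultimately show ?thesis by linarith
  qed
  have wu2: "(w - u)^2 \<le> s * (16 * u)"
  proof -
    have "w - u = (v-c) * (v+c)" using u_def w_def by (simp add: power2_eq_square algebra_simps)
    hence "(w-u)^2 = (v-c)^2 * (v+c)^2" by (simp add: power_mult_distrib)
    hence e: "(w-u)^2 = s * (v+c)^2" using s_def by simp
    have "v + c \<le> 4 * c" using A by simp
    hence "(v+c)^2 \<le> (4 * c)^2" using c0 v0 by (intro power_mono) auto
    hence "(v+c)^2 \<le> 16 * u" using u_def by (simp add: power2_eq_square)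
    thus ?thesis using e s0 by (simp add: mult_left_mono)
  qed
  have A2: "(exp(-u) * (w-u))^2 \<le> 64 * s * (R * (1-R))"
  proof -
    have "(exp(-u) * (w-u))^2 = exp(-u)^2 * (w-u)^2" by (simp add: power_mult_distrib)
    also have "\<dots> \<le> exp(-u)^2 * (s * (16 * u))" using wu2 by (intro mult_left_mono) auto
    also have "\<dots> = 32 * s * ((1/2) * (u * exp(-u)^2))" by (simp add: algebra_simps)
    also have "\<dots> \<le> 32 * s * (R * (1-R))" using RR s0 by (intro mult_left_mono) auto
    also have "\<dots> \<le> 64 * s * (R * (1-R))" using R0 R1 s0 by (intro mult_right_mono) auto
    finally show ?thesis .
  qed
  have "(Q-R)^2 \<le> (64 * s + 2 * E) * (R * (1-R))"
    using sq A2 Ebit by (simp add: algebra_simps)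
  hence "dfun Q R \<le> 64 * s + 2 * E"
    using Q0 Q1 R0 R1 by (intro chi2_bound) auto
  moreover have "64 * s \<le> b * s" using b300 s0 by (intro mult_right_mono) auto
  ultimately show ?thesis using E0 by linarith
qed

end

context pw begin

lemma v3c: assumes "3 * c < v" shows "9 * u \<le> w" "(2 * v / 3)^2 \<le> s" "u \<le> w"
proof -
  have "3 * c \<le> v" using assms by simp
  hence "(3 * c)^2 \<le> v^2" using c0 by (intro power_mono) auto
  thus "9 * u \<le> w" using u_def w_def by (simp add: power2_eq_square)
  thus "u \<le> w" using u0 by simp
  have "2 * v / 3 \<le> v - c" using assms by simp
  hence "(2 * v / 3)^2 \<le> (v-c)^2" using v0 by (intro power_mono) auto
  thus "(2 * v / 3)^2 \<le> s" using s_def by simp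
qed

lemma regD1: assumes D1: "3 * c < v" "1 \<le> c" shows "dfun Q R \<le> 300 * E + b * s"
proof -
  have w9: "9 * u \<le> w" using v3c D1 by simp
  have "1 * 1 \<le> c * c" using D1 by (intro mult_mono) auto
  hence u1: "1 \<le> u" using u_def by (simp add: power2_eq_square)
  have "u - w - ln (1-E) \<le> 0" using w9 u1 lE Eh by linarith
  hence T2n: "exp(-w) * (u - w - ln (1-E)) \<le> 0" by (simp add: mult_nonneg_nonpos)
  have Rh: "1/2 \<le> R"
  proof -
    have "exp(-u) \<le> exp(-1)" using u1 by simp
    moreover have "exp(-1) \<le> (1/2::real)"
      using exp_ge_add_one_self[of 1] by (simp add: exp_minus field_simps)
    ultimately show ?thesis using Ru by linarith
  qed
  have T1: "Q * ln (Q/R) \<le> 1"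
  proof (cases "Q = 0")
    case False
    hence Qp: "0 < Q" using Q0 by simp
    have "ln (Q/R) = ln Q - ln R" using Qp R0 by (simp add: ln_div)
    moreover have "ln Q \<le> 0" using Qp Q1 by simp
    moreover have "ln (1/2) \<le> ln R" using Rh by (intro ln_mono) auto
    moreover have "ln (1/2::real) = - ln 2" by (simp add: ln_div)
    ultimately have l1: "ln (Q/R) \<le> 1" using ln_2_less_1 by linarith
    show ?thesis
    proof (cases "ln (Q/R) \<le> 0")
      case True thus ?thesis using Q0 by (smt (verit) mult_nonneg_nonpos)
    next
      case False
      have "Q * ln (Q/R) \<le> 1 * ln (Q/R)" using Q1 False by (intro mult_right_mono) auto
      thus ?thesis using l1 by linarith
    qed
  qed simp
  have "2 * 1 \<le> 2 * c" using D1 by simp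
  hence "2 \<le> v - c" using D1 by linarith
  hence "2^2 \<le> (v-c)^2" by (intro power_mono) auto
  hence s4: "4 \<le> s" using s_def by simp
  have "300 * 4 \<le> b * s" using b300 s4 by (intro mult_mono) auto
  thus ?thesis using dec T1 T2n E0 by linarith
qed

lemma regD2a: assumes D2a: "3 * c < v" "c < 1" "v \<le> c * L" shows "dfun Q R \<le> 300 * E + b * s"
proof -
  have vpos: "0 < v" using D2a c0 by linarith
  have cpos: "0 < c"
  proof (rule ccontr)
    assume "\<not> 0 < c" hence "c = 0" using c0 by simp
    thus False using D2a vpos by simp
  qed
  have upos: "0 < u" and wpos: "0 < w" using cpos vpos u_def w_def by auto
  have w9: "u \<le> w" using v3c D2a by simp
  have T2n: "exp(-w) * (u - w - ln (1-E)) \<le> 2 * E"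
  proof -
    have "exp(-w) * (u - w) \<le> 0" using w9 by (simp add: mult_nonneg_nonpos)
    thus ?thesis using T2b by linarith
  qed
  have R3: "u / 3 \<le> R"
  proof -
    have "c * c \<le> 1 * 1" using D2a c0 by (intro mult_mono) auto
    hence "u \<le> 1" using u_def by (simp add: power2_eq_square)
    hence "exp(-1) \<le> exp(-u)" by simp
    moreover have "1/3 \<le> exp(-1::real)" using exp_le by (simp add: exp_minus field_simps)
    ultimately have "1/3 \<le> exp(-u)" by linarith
    hence "u * (1/3) \<le> u * exp(-u)" using u0 by (intro mult_left_mono) auto
    thus ?thesis using Ruu by simp
  qed
  have wuL: "w \<le> u * L^2"
  proof -
    have "v^2 \<le> (c * L)^2" using D2a v0 by (intro power_mono) auto
    thus ?thesis using u_def w_def by (simp add: power_mult_distrib)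
  qed
  have wR: "w / R \<le> 3 * L^2"
  proof -
    have "w / R \<le> w / (u / 3)" using R3 upos w0 by (intro divide_left_mono) auto
    also have "\<dots> = 3 * (w / u)" by simp
    also have "w / u \<le> L^2" using wuL upos by (simp add: divide_le_eq mult.commute)
    finally show ?thesis by simp
  qed
  have l3: "ln (3::real) \<le> 2" using ln_le_minus_one[of 3] by simp
  have lnwR: "ln (w / R) \<le> 2 + 2 * ln L"
  proof -
    have "ln (w / R) \<le> ln (3 * L^2)" using wR wpos R0 by (intro ln_mono) auto
    also have "\<dots> = ln 3 + 2 * ln L" using L2 by (simp add: ln_mult ln_realpow)
    finally show ?thesis using l3 by linarith
  qed
  have T1: "Q * ln (Q/R) \<le> w * (2 + 2 * ln L)"
  proof (cases "Q = 0")
    case True thus ?thesis using w0 lnL0 by simp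
  next
    case False
    hence Qp: "0 < Q" using Q0 by simp
    have "ln (Q/R) \<le> ln (w/R)" using Qp Qw R0 by (intro ln_mono divide_right_mono) auto
    hence "Q * ln (Q/R) \<le> Q * (2 + 2 * ln L)" using lnwR Q0 by (intro mult_left_mono) auto
    also have "\<dots> \<le> w * (2 + 2 * ln L)" using Qw lnL0 by (intro mult_right_mono) auto
    finally show ?thesis .
  qed
  have s49: "(4/9) * w \<le> s" using v3c(2)[OF D2a(1)] w_def by (simp add: power2_eq_square)
  have "w * (2 + 2 * ln L) \<le> b * ((4/9) * w)"
  proof -
    have "9 * (2 + 2 * ln L) \<le> 4 * b" using lnLb b_def L2 by simp
    hence "(9 * (2 + 2 * ln L)) * w \<le> (4 * b) * w" using w0 by (intro mult_right_mono) auto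
    thus ?thesis by (simp add: algebra_simps)
  qed
  also have "\<dots> \<le> b * s" using s49 b300 by (intro mult_left_mono) auto
  finally show ?thesis using dec T1 T2n E0 by linarith
qed

lemma regD2b: assumes D2b: "3 * c < v" "c < 1" "c * L < v" shows "dfun Q R \<le> 300 * E + b * s"
proof -
  have vpos: "0 < v" using D2b c0 by linarith
  have wpos: "0 < w" using vpos w_def by auto
  have w9: "u \<le> w" using v3c D2b by simp
  have T2n: "exp(-w) * (u - w - ln (1-E)) \<le> 2 * E"
  proof -
    have "exp(-w) * (u - w) \<le> 0" using w9 by (simp add: mult_nonneg_nonpos)
    thus ?thesis using T2b by linarith
  qed
  have lnwE: "ln (w / E) = L + ln w" using E0 wpos L_def by (simp add: ln_div)
  have T1: "Q * ln (Q/R) \<le> (L - ln L + 1) * w"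
  proof (cases "Q = 0")
    case True
    have "0 \<le> L - ln L + 1" using lnLb L2 by simp
    thus ?thesis using True w0 by simp
  next
    case False
    hence Qp: "0 < Q" using Q0 by simp
    have "Q / R \<le> w / E" using Qp Qw R0 RE E0 by (intro frac_le) auto
    hence "ln (Q/R) \<le> ln (w / E)" using Qp R0 by (intro ln_mono) auto
    hence "Q * ln (Q/R) \<le> Q * (L + ln w)" using lnwE Q0 by (intro mult_left_mono) auto
    also have "\<dots> \<le> (L - ln L + 1) * w" using core[OF wpos] L2 Q_def by simp
    finally show ?thesis .
  qed
  have sw: "w - 2 * w / L \<le> s"
  proof -
    have "c < v / L" using D2b L2 by (simp add: field_simps)
    hence "v * c \<le> v * (v / L)" using vpos by (intro mult_left_mono) auto
    hence "2 * (v * c) \<le> 2 * w / L" using w_def by (simp add: power2_eq_square)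
    moreover have "s = w - 2 * (v * c) + c^2" using s_def w_def by (simp add: power2_eq_square algebra_simps)
    moreover have "0 \<le> c^2" by simp
    ultimately show ?thesis by linarith
  qed
  have "(L - ln L + 1) * w \<le> b * (w - 2 * w / L)"
  proof -
    have "2 * b \<le> 299 * L" using b_def lnL0 L2 by linarith
    hence "2 * b / L \<le> 299" using L2 by (simp add: divide_le_eq)
    hence h: "(2 * b / L) * w \<le> 299 * w" using w0 by (intro mult_right_mono) auto
    have e: "L - ln L + 1 = b - 299" using b_def by linarith
    have "(L - ln L + 1) * w = b * w - 299 * w" by (simp only: e left_diff_distrib)
    also have "\<dots> \<le> b * w - (2 * b / L) * w" using h by linarith
    also have "\<dots> = b * (w - 2 * w / L)" by (simp add: algebra_simps)
    finally show ?thesis .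
  qed
  also have "\<dots> \<le> b * s" using sw b300 by (intro mult_left_mono) auto
  finally show ?thesis using dec T1 T2n E0 by linarith
qed

lemma main: "dfun Q R \<le> 300 * E + b * s"
proof -
  consider "w \<le> u - 1" | "u - 1 < w" "v \<le> c" | "c \<le> v" "v \<le> 3 * c"
      | "3 * c < v" "1 \<le> c" | "3 * c < v" "c < 1" "v \<le> c * L" | "3 * c < v" "c < 1" "c * L < v"
    by linarith
  thus ?thesis using regC regB regA regD1 regD2a regD2b by cases blast+
qed

end

lemma pointwise:
  fixes E c v :: real
  assumes "0 < E" "2000 \<le> ln (1/E)" "0 \<le> c" "0 \<le> v"
  shows "dfun (1 - exp(-(v^2))) (1 - (1-E) * exp(-(c^2)))
           \<le> 300 * E + (ln (1/E) - ln (ln (1/E)) + 300) * (v-c)^2"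
proof -
  interpret pw E c v "ln (1/E)" "c^2" "v^2" "1 - exp(-(v^2))" "1 - (1-E) * exp(-(c^2))"
     "ln (1/E) - ln (ln (1/E)) + 300" "(v-c)^2"
    using assms by unfold_locales auto
  show ?thesis using main .
qed



definition gprod :: "(bool list \<Rightarrow> bool \<Rightarrow> real) \<Rightarrow> bool list \<Rightarrow> real" where
  "gprod k ys = (\<Prod>i<length ys. k (take i ys) (ys ! i))"

definition stoch :: "(bool list \<Rightarrow> bool \<Rightarrow> real) \<Rightarrow> bool" where
  "stoch k \<longleftrightarrow> (\<forall>zs. (\<forall>y. 0 \<le> k zs y) \<and> k zs True + k zs False = 1)"

definition kstep :: "(bool list \<Rightarrow> bool \<Rightarrow> real) \<Rightarrow> (bool list \<Rightarrow> bool \<Rightarrow> real) \<Rightarrow> bool list \<Rightarrow> real" where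
  "kstep k kq zs = k zs True * ln (k zs True / kq zs True) + k zs False * ln (k zs False / kq zs False)"

definition KLd :: "(bool list \<Rightarrow> bool \<Rightarrow> real) \<Rightarrow> (bool list \<Rightarrow> bool \<Rightarrow> real) \<Rightarrow> nat \<Rightarrow> real" where
  "KLd k kq N = (\<Sum>ys\<in>{ys. length ys = N}. gprod k ys * ln (gprod k ys / gprod kq ys))"

lemma gprod_Cons: "gprod k (y # zs) = k [] y * gprod (\<lambda>ws. k (y # ws)) zs"
  unfolding gprod_def length_Cons prod.lessThan_Suc_shift by simp

lemma finite_lists: "finite {ys::bool list. length ys = N}"
  using finite_lists_length_eq[of "UNIV::bool set" N] by simp

lemma sum_lists_Suc:
  "(\<Sum>ys\<in>{ys::bool list. length ys = Suc N}. f ys) = f' True + f' False"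
  if "f' = (\<lambda>y. \<Sum>zs\<in>{zs. length zs = N}. f (y # zs))"
proof -
  have e: "{ys::bool list. length ys = Suc N} = (\<lambda>(y,zs). y # zs) ` (UNIV \<times> {zs. length zs = N})"
    by (auto simp: length_Suc_conv image_iff)
  have i: "inj_on (\<lambda>(y,zs). y # zs) (UNIV \<times> {zs::bool list. length zs = N})"
    by (auto simp: inj_on_def)
  have "(\<Sum>ys\<in>{ys::bool list. length ys = Suc N}. f ys) = (\<Sum>p\<in>UNIV \<times> {zs. length zs = N}. f (fst p # snd p))"
    unfolding e by (subst sum.reindex[OF i]) (simp add: case_prod_beta)
  also have "\<dots> = (\<Sum>y\<in>UNIV. \<Sum>zs\<in>{zs. length zs = N}. f (y # zs))"
    by (subst sum.cartesian_product) (simp add: case_prod_beta)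
  also have "\<dots> = f' True + f' False" using that by (simp add: UNIV_bool add.commute)
  finally show ?thesis .
qed

lemma stoch_shift: "stoch k \<Longrightarrow> stoch (\<lambda>ws. k (y # ws))"
  unfolding stoch_def by simp

lemma gprod_nonneg: "stoch k \<Longrightarrow> 0 \<le> gprod k ys"
  unfolding gprod_def stoch_def by (intro prod_nonneg) auto

lemma gprod_pos: "\<forall>zs y. 0 < kq zs y \<Longrightarrow> 0 < gprod kq ys"
  unfolding gprod_def by (intro prod_pos) auto

lemma sum_gprod: "stoch k \<Longrightarrow> (\<Sum>ys\<in>{ys. length ys = N}. gprod k ys) = 1"
proof (induction N arbitrary: k)
  case 0
  have "{ys::bool list. length ys = 0} = {[]}" by auto
  thus ?case by (simp add: gprod_def)
next
  case (Suc N)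
  have "(\<Sum>ys\<in>{ys. length ys = Suc N}. gprod k ys)
     = (\<Sum>zs\<in>{zs. length zs = N}. gprod k (True # zs)) + (\<Sum>zs\<in>{zs. length zs = N}. gprod k (False # zs))"
    by (rule sum_lists_Suc) simp
  also have "\<dots> = k [] True * 1 + k [] False * 1"
    unfolding gprod_Cons sum_distrib_left[symmetric]
    using Suc.IH[OF stoch_shift[OF Suc.prems]] by simp
  also have "\<dots> = 1" using Suc.prems unfolding stoch_def by simp
  finally show ?case .
qed

lemma term_split:
  fixes a P r Q :: real assumes "0 \<le> a" "0 \<le> P" "0 < r" "0 < Q"
  shows "(a * P) * ln ((a * P) / (r * Q)) = P * (a * ln (a / r)) + a * (P * ln (P / Q))"
proof (cases "a = 0 \<or> P = 0")
  case True thus ?thesis by auto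
next
  case False
  hence "0 < a" "0 < P" using assms by auto
  hence "ln ((a * P) / (r * Q)) = ln (a / r) + ln (P / Q)" using assms
    by (simp add: ln_div ln_mult)
  thus ?thesis by (simp add: algebra_simps)
qed

lemma chain:
  assumes "stoch k" "\<forall>zs y. 0 < kq zs y" "\<forall>zs. length zs < N \<longrightarrow> kstep k kq zs \<le> c (length zs)"
  shows "KLd k kq N \<le> (\<Sum>i<N. c i)"
  using assms
proof (induction N arbitrary: k kq c)
  case 0
  have "{ys::bool list. length ys = 0} = {[]}" by auto
  thus ?case by (simp add: KLd_def gprod_def)
next
  case (Suc N)
  define k1 where "k1 = (\<lambda>y ws. k (y # ws))"
  define q1 where "q1 = (\<lambda>y ws. kq (y # ws))"
  have st1: "stoch (k1 y)" for y unfolding k1_def using stoch_shift[OF Suc.prems(1)] .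
  have pos1: "\<forall>zs y'. 0 < q1 y zs y'" for y unfolding q1_def using Suc.prems(2) by simp
  have IH: "KLd (k1 y) (q1 y) N \<le> (\<Sum>i<N. c (Suc i))" for y
  proof -
    have h: "\<forall>zs. length zs < N \<longrightarrow> kstep (k1 y) (q1 y) zs \<le> c (Suc (length zs))"
    proof (intro allI impI)
      fix zs :: "bool list" assume "length zs < N"
      hence "length (y # zs) < Suc N" by simp
      from Suc.prems(3)[rule_format, OF this]
      show "kstep (k1 y) (q1 y) zs \<le> c (Suc (length zs))" by (simp add: kstep_def k1_def q1_def)
    qed
    show ?thesis using Suc.IH[OF st1[of y] pos1[of y], where c="\<lambda>i. c (Suc i)"] h by simp
  qed
  have k0: "0 \<le> k [] y" for y using Suc.prems(1) unfolding stoch_def by simp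
  have one: "(\<Sum>zs\<in>{zs. length zs = N}. gprod (k1 y) zs) = 1" for y using sum_gprod[OF st1] .
  have part: "(\<Sum>zs\<in>{zs. length zs = N}. gprod k (y # zs) * ln (gprod k (y # zs) / gprod kq (y # zs)))
      = k [] y * ln (k [] y / kq [] y) + k [] y * KLd (k1 y) (q1 y) N" for y
  proof -
    have "(\<Sum>zs\<in>{zs. length zs = N}. gprod k (y # zs) * ln (gprod k (y # zs) / gprod kq (y # zs)))
       = (\<Sum>zs\<in>{zs. length zs = N}. gprod (k1 y) zs * (k [] y * ln (k [] y / kq [] y))
            + k [] y * (gprod (k1 y) zs * ln (gprod (k1 y) zs / gprod (q1 y) zs)))"
    proof (rule sum.cong[OF refl])
      fix zs
      show "gprod k (y # zs) * ln (gprod k (y # zs) / gprod kq (y # zs))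
         = gprod (k1 y) zs * (k [] y * ln (k [] y / kq [] y))
            + k [] y * (gprod (k1 y) zs * ln (gprod (k1 y) zs / gprod (q1 y) zs))"
        unfolding gprod_Cons k1_def[symmetric] q1_def[symmetric]
        using term_split[OF k0 gprod_nonneg[OF st1] _ gprod_pos[OF pos1]] Suc.prems(2)
        by (simp add: k1_def q1_def)
    qed
    also have "\<dots> = k [] y * ln (k [] y / kq [] y) + k [] y * KLd (k1 y) (q1 y) N"
      unfolding sum.distrib sum_distrib_right[symmetric] sum_distrib_left[symmetric] one KLd_def
      by simp
    finally show ?thesis .
  qed
  have "KLd k kq (Suc N) = (k [] True * ln (k [] True / kq [] True) + k [] True * KLd (k1 True) (q1 True) N)
      + (k [] False * ln (k [] False / kq [] False) + k [] False * KLd (k1 False) (q1 False) N)"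
    unfolding KLd_def by (subst sum_lists_Suc[OF refl]) (simp only: part[unfolded KLd_def])
  also have "\<dots> = kstep k kq [] + (k [] True * KLd (k1 True) (q1 True) N + k [] False * KLd (k1 False) (q1 False) N)"
    unfolding kstep_def by simp
  also have "\<dots> \<le> c 0 + (k [] True * (\<Sum>i<N. c (Suc i)) + k [] False * (\<Sum>i<N. c (Suc i)))"
    using Suc.prems(3)[rule_format, of "[]"] IH k0 by (intro add_mono mult_left_mono) auto
  also have "\<dots> = c 0 + (\<Sum>i<N. c (Suc i))"
    using Suc.prems(1) unfolding stoch_def by (simp add: distrib_right[symmetric])
  also have "\<dots> = (\<Sum>i<Suc N. c i)" by (simp only: sum.lessThan_Suc_shift)
  finally show ?case .
qed



lemma xlnx_ge: fixes P Q c :: real assumes "0 \<le> P" "0 < Q" "0 < c"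
  shows "P * ln c - c * Q \<le> P * ln (P / Q)"
proof (cases "P = 0")
  case True thus ?thesis using assms by simp
next
  case False
  hence Pp: "0 < P" using assms by simp
  have "ln (c * Q / P) \<le> c * Q / P - 1" using Pp assms by (intro ln_le_minus_one) simp
  hence "P * ln (c * Q / P) \<le> P * (c * Q / P - 1)" using Pp by (intro mult_left_mono) auto
  also have "\<dots> = c * Q - P" using Pp by (simp add: field_simps)
  finally have h: "P * ln (c * Q / P) \<le> c * Q - P" .
  have e: "ln (P / Q) = ln c - ln (c * Q / P)" using Pp assms by (simp add: ln_div ln_mult)
  have "P * ln (P / Q) = P * (ln c - ln (c * Q / P))" by (simp only: e)
  hence "P * ln (P / Q) = P * ln c - P * ln (c * Q / P)" by (simp only: right_diff_distrib)
  thus ?thesis using h Pp by linarith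
qed

lemma fano:
  fixes P :: "nat \<Rightarrow> bool list \<Rightarrow> real" and Qd :: "bool list \<Rightarrow> real" and Y :: "bool list set"
    and dec :: "bool list \<Rightarrow> nat" and Mn :: nat and S :: real
  assumes fin: "finite Y" and P0: "\<And>m ys. 0 \<le> P m ys" and Qp: "\<And>ys. 0 < Qd ys"
    and Q1: "(\<Sum>ys\<in>Y. Qd ys) = 1"
    and Sdef: "S = (\<Sum>m<Mn. \<Sum>ys\<in>Y. P m ys * (if dec ys = m then 1 else 0))" and Sp: "0 < S"
  shows "S * ln S - S - real Mn \<le> (\<Sum>m<Mn. \<Sum>ys\<in>Y. P m ys * ln (P m ys / Qd ys))"
proof -
  have tw: "(if dec ys = m then P m ys * ln S else 0) - S * (if dec ys = m then Qd ys else 0) - Qd ys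
      \<le> P m ys * ln (P m ys / Qd ys)" for m ys
  proof (cases "dec ys = m")
    case True
    thus ?thesis using xlnx_ge[OF P0 Qp Sp, of m ys ys] Qp[of ys] by simp
  next
    case False
    thus ?thesis using xlnx_ge[OF P0 Qp, of 1 m ys ys] by simp
  qed
  have s1: "(\<Sum>m<Mn. \<Sum>ys\<in>Y. (if dec ys = m then P m ys * ln S else 0)) = S * ln S"
    unfolding Sdef sum_distrib_right by (intro sum.cong refl) auto
  have s2: "(\<Sum>m<Mn. \<Sum>ys\<in>Y. (if dec ys = m then Qd ys else 0)) \<le> 1"
  proof -
    have "(\<Sum>m<Mn. \<Sum>ys\<in>Y. (if dec ys = m then Qd ys else 0))
        = (\<Sum>ys\<in>Y. \<Sum>m<Mn. (if dec ys = m then Qd ys else 0))" by (rule sum.swap)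
    also have "\<dots> = (\<Sum>ys\<in>Y. (if dec ys < Mn then Qd ys else 0))"
      by (intro sum.cong refl) (simp add: sum.delta)
    also have "\<dots> \<le> (\<Sum>ys\<in>Y. Qd ys)" using Qp by (intro sum_mono) (auto intro: less_imp_le)
    finally show ?thesis using Q1 by simp
  qed
  have s3: "(\<Sum>m<Mn. \<Sum>ys\<in>Y. Qd ys) = real Mn" using Q1 by simp
  have "S * ln S - S - real Mn \<le> S * ln S - S * (\<Sum>m<Mn. \<Sum>ys\<in>Y. (if dec ys = m then Qd ys else 0)) - real Mn"
  proof -
    have "S * (\<Sum>m<Mn. \<Sum>ys\<in>Y. (if dec ys = m then Qd ys else 0)) \<le> S * 1"
      using s2 Sp by (intro mult_left_mono) auto
    thus ?thesis by linarith
  qed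
  also have "\<dots> = (\<Sum>m<Mn. \<Sum>ys\<in>Y. (if dec ys = m then P m ys * ln S else 0) - S * (if dec ys = m then Qd ys else 0) - Qd ys)"
    unfolding sum_subtractf s1 s3 sum_distrib_left by simp
  also have "\<dots> \<le> (\<Sum>m<Mn. \<Sum>ys\<in>Y. P m ys * ln (P m ys / Qd ys))"
    using tw by (intro sum_mono) auto
  finally show ?thesis .
qed



definition kx :: "(nat \<Rightarrow> complex) \<Rightarrow> (bool list \<Rightarrow> complex) \<Rightarrow> bool list \<Rightarrow> bool \<Rightarrow> real" where
  "kx x l zs y = p_out (x (length zs)) (l zs) y"

definition kqd :: "real \<Rightarrow> (bool list \<Rightarrow> complex) \<Rightarrow> bool list \<Rightarrow> bool \<Rightarrow> real" where
  "kqd E l zs y = (if y then 1 - (1-E) * exp (- (cmod (l zs))\<^sup>2) else (1-E) * exp (- (cmod (l zs))\<^sup>2))"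

lemma seq_prob_gprod: "seq_prob x l ys = gprod (kx x l) ys"
  unfolding seq_prob_def gprod_def kx_def by (intro prod.cong refl) simp

lemma stoch_kx: "stoch (kx x l)"
  unfolding stoch_def kx_def p_out_def by auto

lemma Elt1: fixes E :: real assumes "0 < E" "2000 \<le> ln (1/E)" shows "E < 1"
proof (rule ccontr)
  assume "\<not> E < 1"
  hence "1/E \<le> 1" using assms by (simp add: field_simps)
  moreover have "ln (1/E) \<le> 1/E - 1" using assms by (intro ln_le_minus_one) simp
  ultimately show False using assms by linarith
qed

lemma kqd_bits: assumes "0 < E" "E < 1"
  shows "0 < (1-E) * exp (- (cmod (l zs))\<^sup>2)" "(1-E) * exp (- (cmod (l zs))\<^sup>2) < 1"
proof -
  show "0 < (1-E) * exp (- (cmod (l zs))\<^sup>2)" using assms by simp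
  have "(1-E) * exp (- (cmod (l zs))\<^sup>2) \<le> (1-E) * 1" using assms by (intro mult_left_mono) auto
  hence "(1-E) * exp (- (cmod (l zs))\<^sup>2) \<le> 1 - E" by simp
  thus "(1-E) * exp (- (cmod (l zs))\<^sup>2) < 1" using assms by linarith
qed

lemma kqd_pos: assumes "0 < E" "E < 1" shows "\<forall>zs y. 0 < kqd E l zs y"
  using kqd_bits[OF assms] unfolding kqd_def by auto

lemma stoch_kqd: assumes "0 < E" "E < 1" shows "stoch (kqd E l)"
  using kqd_bits[OF assms, of l] unfolding stoch_def kqd_def by (auto intro: less_imp_le)

lemma kstep_bound:
  assumes E0: "0 < E" and LL: "2000 \<le> ln (1/E)"
  shows "kstep (kx x l) (kqd E l) zs \<le> 300 * E + (ln (1/E) - ln (ln (1/E)) + 300) * (cmod (x (length zs)))^2"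
proof -
  define c where "c = cmod (l zs)"
  define v where "v = cmod (x (length zs) + l zs)"
  define b where "b = ln (1/E) - ln (ln (1/E)) + 300"
  have E1: "E < 1" using Elt1[OF E0 LL] .
  have b0: "0 \<le> b"
  proof -
    have "ln (ln (1/E)) \<le> ln (1/E) - 1" using LL by (intro ln_le_minus_one) simp
    thus ?thesis using b_def by simp
  qed
  have ks: "kstep (kx x l) (kqd E l) zs = dfun (1 - exp(-(v^2))) (1 - (1-E) * exp(-(c^2)))"
    unfolding kstep_def kx_def kqd_def p_out_def dfun_def c_def v_def by simp
  have pw: "dfun (1 - exp(-(v^2))) (1 - (1-E) * exp(-(c^2))) \<le> 300 * E + b * (v - c)^2"
    using pointwise[OF E0 LL, of c v] c_def v_def b_def by simp
  have "\<bar>v - c\<bar> \<le> cmod (x (length zs))"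
    using norm_triangle_ineq3[of "x (length zs) + l zs" "l zs"] v_def c_def by simp
  hence "\<bar>v - c\<bar>^2 \<le> (cmod (x (length zs)))^2" by (intro power_mono) auto
  hence "(v - c)^2 \<le> (cmod (x (length zs)))^2" by simp
  hence "b * (v - c)^2 \<le> b * (cmod (x (length zs)))^2" using b0 by (intro mult_left_mono) auto
  thus ?thesis using ks pw b_def by simp
qed

lemma KL_bound:
  assumes E0: "0 < E" and LL: "2000 \<le> ln (1/E)"
  shows "KLd (kx x l) (kqd E l) N \<le> (\<Sum>i<N. 300 * E + (ln (1/E) - ln (ln (1/E)) + 300) * (cmod (x i))^2)"
proof -
  have E1: "E < 1" using Elt1[OF E0 LL] .
  show ?thesis
    by (rule chain[OF stoch_kx kqd_pos[OF E0 E1]]) (use kstep_bound[OF E0 LL] in simp)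
qed



lemma block:
  fixes E R :: real and N Mn :: nat and enc :: "nat \<Rightarrow> nat \<Rightarrow> complex" and l :: "bool list \<Rightarrow> complex"
    and dec :: "bool list \<Rightarrow> nat"
  assumes E0: "0 < E" and LL: "2000 \<le> ln (1/E)" and val: "valid_encoder A E N Mn enc"
    and Mn: "Mn = num_msgs N R" and er: "err_prob N Mn enc l dec \<le> 1/2"
  shows "(1 - err_prob N Mn enc l dec) * (real N * R)
           \<le> real N * (300 * E + (ln (1/E) - ln (ln (1/E)) + 300) * E) + 3"
proof -
  define b where "b = ln (1/E) - ln (ln (1/E)) + 300"
  define err where "err = err_prob N Mn enc l dec"
  define Y where "Y = {ys::bool list. length ys = N}"
  define P where "P = (\<lambda>m ys. seq_prob (enc m) l ys)"
  define Qd where "Qd = gprod (kqd E l)"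
  have E1: "E < 1" using Elt1[OF E0 LL] .
  have fY: "finite Y" using finite_lists Y_def by simp
  have expp: "0 < exp (real N * R)" by simp
  have MnR: "exp (real N * R) \<le> real Mn"
    unfolding Mn num_msgs_def using expp by (simp add: of_nat_nat le_of_int_ceiling)
  hence Mnp: "0 < real Mn" using expp by linarith
  have lnMn: "real N * R \<le> ln (real Mn)"
    using ln_mono[OF MnR expp] by simp
  have P0: "0 \<le> P m ys" for m ys unfolding P_def seq_prob_gprod using gprod_nonneg[OF stoch_kx] .
  have Psum: "(\<Sum>ys\<in>Y. P m ys) = 1" for m
    unfolding P_def seq_prob_gprod Y_def using sum_gprod[OF stoch_kx] .
  have Qp: "0 < Qd ys" for ys unfolding Qd_def using gprod_pos[OF kqd_pos[OF E0 E1]] .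
  have Q1: "(\<Sum>ys\<in>Y. Qd ys) = 1" unfolding Qd_def Y_def using sum_gprod[OF stoch_kqd[OF E0 E1]] .
  define S where "S = (\<Sum>m<Mn. \<Sum>ys\<in>Y. P m ys * (if dec ys = m then 1 else 0))"
  have errdef: "err * real Mn = (\<Sum>m<Mn. \<Sum>ys\<in>Y. P m ys * (if dec ys = m then 0 else 1))"
    unfolding err_def err_prob_def P_def Y_def using Mnp by simp
  have err0: "0 \<le> err"
  proof -
    have "0 \<le> (\<Sum>m<Mn. \<Sum>ys\<in>Y. P m ys * (if dec ys = m then 0 else 1))"
      using P0 by (intro sum_nonneg) auto
    hence "0 \<le> err * real Mn" using errdef by simp
    thus ?thesis using Mnp by (simp add: zero_le_mult_iff)
  qed
  have Sdef2: "S = real Mn * (1 - err)"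
  proof -
    have "S = (\<Sum>m<Mn. \<Sum>ys\<in>Y. P m ys - P m ys * (if dec ys = m then 0 else 1))"
      unfolding S_def by (intro sum.cong refl) auto
    also have "\<dots> = (\<Sum>m<Mn. (\<Sum>ys\<in>Y. P m ys)) - err * real Mn"
      unfolding sum_subtractf errdef by simp
    also have "\<dots> = real Mn - err * real Mn" using Psum by simp
    finally show ?thesis by (simp add: algebra_simps)
  qed
  define s where "s = 1 - err"
  have s12: "1/2 \<le> s" "s \<le> 1" using er err0 s_def err_def by auto
  have Sp: "0 < S" using Sdef2 s12 Mnp s_def by simp
  have fa: "S * ln S - S - real Mn \<le> (\<Sum>m<Mn. \<Sum>ys\<in>Y. P m ys * ln (P m ys / Qd ys))"
    by (rule fano[OF fY P0 Qp Q1 S_def Sp])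
  have KLs: "(\<Sum>m<Mn. \<Sum>ys\<in>Y. P m ys * ln (P m ys / Qd ys)) \<le> real Mn * (real N * (300 * E + b * E))"
  proof -
    have "(\<Sum>m<Mn. \<Sum>ys\<in>Y. P m ys * ln (P m ys / Qd ys)) = (\<Sum>m<Mn. KLd (kx (enc m) l) (kqd E l) N)"
      unfolding KLd_def P_def Qd_def Y_def seq_prob_gprod by simp
    also have "\<dots> \<le> (\<Sum>m<Mn. \<Sum>i<N. 300 * E + b * (cmod (enc m i))^2)"
      unfolding b_def by (intro sum_mono KL_bound[OF E0 LL])
    also have "\<dots> = real Mn * (real N * (300 * E)) + b * (\<Sum>i<N. \<Sum>m<Mn. (cmod (enc m i))^2)"
      by (simp add: sum.distrib sum_distrib_left[symmetric] sum.swap[of _ "{..<N}"])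
    also have "(\<Sum>i<N. \<Sum>m<Mn. (cmod (enc m i))^2) = (\<Sum>i<N. E * real Mn)"
    proof (intro sum.cong refl)
      fix i assume "i \<in> {..<N}"
      hence "(\<Sum>m<Mn. (cmod (enc m i))\<^sup>2) / real Mn = E" using val unfolding valid_encoder_def by simp
      thus "(\<Sum>m<Mn. (cmod (enc m i))^2) = E * real Mn" using Mnp by (simp add: field_simps)
    qed
    finally show ?thesis by (simp add: algebra_simps)
  qed
  have lns: "-1 \<le> ln s"
  proof -
    have "ln (1/s) \<le> 1/s - 1" using s12 by (intro ln_le_minus_one) simp
    moreover have "ln (1/s) = - ln s" using s12 by (simp add: ln_div)
    moreover have "1/s \<le> 2" using s12 by (simp add: field_simps)
    ultimately show ?thesis by linarith
  qed
  have SlnS: "real Mn * s * ln (real Mn) - real Mn \<le> S * ln S"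
  proof -
    have Ss: "S = real Mn * s" using Sdef2 s_def by simp
    have "ln S = ln (real Mn) + ln s" using Ss Mnp s12 by (simp add: ln_mult)
    hence "S * ln S = real Mn * s * ln (real Mn) + real Mn * (s * ln s)"
      using Ss by (simp add: algebra_simps)
    moreover have "-1 \<le> s * ln s"
    proof -
      have "s * (-1) \<le> s * ln s" using lns s12 by (intro mult_left_mono) auto
      thus ?thesis using s12 by linarith
    qed
    hence "real Mn * (-1) \<le> real Mn * (s * ln s)" using Mnp by (intro mult_left_mono) auto
    ultimately show ?thesis by linarith
  qed
  have SM: "S \<le> real Mn" using Sdef2 s_def s12 Mnp by simp
  have "real Mn * (s * ln (real Mn)) \<le> real Mn * (real N * (300 * E + b * E) + 3)"
    using SlnS fa KLs SM by (simp add: algebra_simps)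
  hence h: "s * ln (real Mn) \<le> real N * (300 * E + b * E) + 3" using Mnp by (simp add: mult_le_cancel_left)
  have "s * (real N * R) \<le> s * ln (real Mn)" using lnMn s12 by (intro mult_left_mono) auto
  thus ?thesis using h s_def err_def b_def by simp
qed



lemma aux: fixes x a c :: real assumes "x * ((a + c)/2) \<le> x * c + 3" shows "x * (a - c) \<le> 6"
proof -
  define p where "p = x * a"
  define q where "q = x * c"
  have e1: "x * ((a + c)/2) = p/2 + q/2" unfolding p_def q_def by (simp add: algebra_simps)
  have e2: "x * (a - c) = p - q" unfolding p_def q_def by (simp add: algebra_simps)
  have "p/2 + q/2 \<le> q + 3" using assms unfolding e1 q_def[symmetric] .
  thus ?thesis unfolding e2 by linarith
qed

theorem theorem1:
  fixes A :: "complex set"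
  assumes "finite A"
  shows "\<exists>K \<delta>. \<delta> > 0 \<and> (\<forall>E R. 0 < E \<and> E < \<delta> \<and> achievable A E R \<longrightarrow>
           R / E \<le> ln (1 / E) - ln (ln (1 / E)) + K)"
proof (intro exI conjI allI impI)
  show "(0::real) < exp (-2000)" by simp
  fix E R :: real
  assume H: "0 < E \<and> E < exp (-2000) \<and> achievable A E R"
  hence E0: "0 < E" and Ed: "E < exp (-2000)" and ach: "achievable A E R" by auto
  have LL: "2000 \<le> ln (1/E)"
  proof -
    have "ln E < ln (exp (-2000))" using E0 Ed by (intro ln_less_cancel_iff[THEN iffD2]) auto
    hence "ln E < -2000" by simp
    thus ?thesis using E0 by (simp add: ln_div)
  qed
  define b where "b = ln (1/E) - ln (ln (1/E)) + 300"
  define c0 where "c0 = 300 * E + b * E"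
  have b0: "0 \<le> b"
  proof -
    have "ln (ln (1/E)) \<le> ln (1/E) - 1" using LL by (intro ln_le_minus_one) simp
    thus ?thesis using b_def by simp
  qed
  have c00: "0 \<le> c0" using b0 E0 c0_def by simp
  have Rc: "R \<le> c0"
  proof (rule ccontr)
    assume "\<not> R \<le> c0"
    hence Rg: "c0 < R" by simp
    hence Rp: "0 < R" using c00 by simp
    define \<eta> where "\<eta> = min (1/2) ((R - c0) / (2 * R))"
    have \<eta>p: "0 < \<eta>" using Rg Rp \<eta>_def by simp
    obtain enc l dec where ev: "\<forall>\<^sub>F N in sequentially. valid_encoder A E N (num_msgs N R) (enc N)"
      and lim: "(\<lambda>N. err_prob N (num_msgs N R) (enc N) (l N) (dec N)) \<longlonglongrightarrow> 0"
      using ach unfolding achievable_def by blast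
    have ev2: "\<forall>\<^sub>F N in sequentially. err_prob N (num_msgs N R) (enc N) (l N) (dec N) < \<eta>"
      using order_tendstoD(2)[OF lim \<eta>p] .
    define N1 where "N1 = nat \<lceil>6 / (R - c0)\<rceil> + 1"
    have ev3: "\<forall>\<^sub>F N in sequentially. N1 \<le> N" by (rule eventually_ge_at_top)
    have "\<forall>\<^sub>F N in sequentially. valid_encoder A E N (num_msgs N R) (enc N)
        \<and> err_prob N (num_msgs N R) (enc N) (l N) (dec N) < \<eta> \<and> N1 \<le> N"
      using ev ev2 ev3 by eventually_elim auto
    then obtain N0 where "\<forall>N\<ge>N0. valid_encoder A E N (num_msgs N R) (enc N)
        \<and> err_prob N (num_msgs N R) (enc N) (l N) (dec N) < \<eta> \<and> N1 \<le> N"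
      unfolding eventually_sequentially by blast
    hence val: "valid_encoder A E N0 (num_msgs N0 R) (enc N0)"
      and erl: "err_prob N0 (num_msgs N0 R) (enc N0) (l N0) (dec N0) < \<eta>"
      and NN: "N1 \<le> N0" by auto
    define err where "err = err_prob N0 (num_msgs N0 R) (enc N0) (l N0) (dec N0)"
    have er: "err \<le> 1/2" using erl err_def \<eta>_def by simp
    have blk: "(1 - err) * (real N0 * R) \<le> real N0 * c0 + 3"
      using block[OF E0 LL val refl er[unfolded err_def]] err_def c0_def b_def by simp
    have "err < (R - c0) / (2 * R)" using erl err_def \<eta>_def by simp
    hence "err * R \<le> (R - c0) / 2" using Rp by (simp add: field_simps)
    hence h0: "(R + c0) / 2 \<le> R - err * R" by (simp add: field_simps)
    have "(1 - err) * R = R - err * R" by (simp add: algebra_simps)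
    hence h1: "(R + c0) / 2 \<le> (1 - err) * R" using h0 by simp
    have "real N0 * ((R + c0) / 2) \<le> real N0 * ((1 - err) * R)" using h1 by (intro mult_left_mono) auto
    moreover have "real N0 * ((1 - err) * R) = (1 - err) * (real N0 * R)" by (simp add: algebra_simps)
    ultimately have h3: "real N0 * ((R + c0) / 2) \<le> real N0 * c0 + 3" using blk by linarith
    have h2: "real N0 * (R - c0) \<le> 6" using aux[OF h3] .
    have "6 / (R - c0) \<le> real (nat \<lceil>6 / (R - c0)\<rceil>)" by linarith
    hence "6 / (R - c0) + 1 \<le> real N0" using NN N1_def by simp
    hence "(6 / (R - c0) + 1) * (R - c0) \<le> real N0 * (R - c0)" using Rg by (intro mult_right_mono) auto
    moreover have "(6 / (R - c0) + 1) * (R - c0) = 6 + (R - c0)" using Rg by (simp add: field_simps)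
    ultimately show False using h2 Rg by linarith
  qed
  have "R / E \<le> c0 / E" using Rc E0 by (simp add: divide_right_mono)
  also have "c0 / E = ln (1 / E) - ln (ln (1 / E)) + 600" using E0 c0_def b_def by (simp add: field_simps)
  finally show "R / E \<le> ln (1 / E) - ln (ln (1 / E)) + 600" .
qed

end
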